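(* In the joint communication and channel discrimination setting described in the context, let $\{\mathcal{C}_n\}_{n\in\mathbb{N}}$ be a sequence of codebooks (of codes with $P_{e,n}\to0$) that achieves the tuple $(R,E_0,E_1)\in\mathcal{R}$. Then there exists a sequence of constant composition codes that also achieves $(R,E_0,E_1)$.
   Context: Finite alphabets $\mathcal{X},\mathcal{Y},\mathcal{Z}$; memoryless channels $P_{Z^n|X^n}(z^n|x^n)=\prod_iP_{Z|X}(z_i|x_i)$ (communication) and $W_n(y^n|x^n)=\prod_iW(y_i|x_i)$, $V_n(y^n|x^n)=\prod_iV(y_i|x_i)$ (sensing under $\theta=0$, $\theta=1$), with $W(y|x)V(y|x)\ne0$; cost function $b:\mathcal{X}\to\mathbb{R}_+$ and budget $B\ge0$. An $(n,|\mathcal{M}_n|)$-code has message set $\mathcal{M}_n=\{1,\dots,|\mathcal{M}_n|\}$, encoder $f_n:\mathcal{M}_n\to\mathcal{X}^n$ with codewords satisfying $\frac1n\sum_ib(x_i)\le B$ (codebook $\mathcal{C}_n$), decoder $\varphi_n:\mathcal{Z}^n\to\mathcal{M}_n$, and discrimination function $\psi_n(y^n,x^n)\in\{0,1\}$. $P_{e,n}=\max_m\Pr[\varphi_n(Z^n)\ne m\mid M=m]$; $\varepsilon_{0,n}(x^n)=\sum_{y^n:\psi_n(y^n,x^n)=1}W_n(y^n|x^n)$, $\varepsilon_{1,n}(x^n)=\sum_{y^n:\psi_n(y^n,x^n)=0}V_n(y^n|x^n)$, $\varepsilon_{j,n}(\mathcal{C}_n)=\max_{x^n\in\mathcal{C}_n}\varepsilon_{j,n}(x^n)$,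 and it is required that $\max\{\varepsilon_{0,n}(\mathcal{C}_n),\varepsilon_{1,n}(\mathcal{C}_n)\}\le\tau$ for all $n$ for some constant $\tau<1$. A sequence of codes achieves $(R,E_0,E_1)$ if $P_{e,n}\to0$, $R=\liminf_n\frac1n\log|\mathcal{M}_n|$, $E_j=\liminf_n-\frac1n\log\varepsilon_{j,n}(\mathcal{C}_n)$; $\mathcal{R}$ is the closure of the set of achievable triples. A constant composition code is one in which all codewords have the same type (empirical distribution $\mathsf{P}_{x^n}(a)=\frac1n|\{i:x_i=a\}|$). *)

theory Defs
  imports "HOL-Analysis.Analysis"
begin

text \<open>A channel Q :: 'a => 'b => real
  is read as Q x y = Q(y|x). Codes are given for every blocklength n >= 1 by
  the number of messages Mn n, the encoder enc n (messages are 1..Mn n),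
  the decoder dec n and the discrimination function dsc n (True = decide 1).\<close>

definition seqs :: "nat \<Rightarrow> 'a list set" where
  "seqs n = {xs. length xs = n}"

definition prod_chan :: "('a \<Rightarrow> 'b \<Rightarrow> real) \<Rightarrow> 'a list \<Rightarrow> 'b list \<Rightarrow> real" where
  "prod_chan Q xs ys = (\<Prod>i<length xs. Q (xs ! i) (ys ! i))"

definition is_channel :: "('a::finite \<Rightarrow> 'b::finite \<Rightarrow> real) \<Rightarrow> bool" where
  "is_channel Q \<longleftrightarrow> (\<forall>x y. 0 \<le> Q x y) \<and> (\<forall>x. (\<Sum>y\<in>UNIV. Q x y) = 1)"

definition codebook :: "(nat \<Rightarrow> nat) \<Rightarrow> (nat \<Rightarrow> nat \<Rightarrow> 'x list) \<Rightarrow> nat \<Rightarrow> 'x list set" where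
  "codebook Mn enc n = enc n ` {1..Mn n}"

definition valid_code :: "('x \<Rightarrow> real) \<Rightarrow> real \<Rightarrow> (nat \<Rightarrow> nat) \<Rightarrow> (nat \<Rightarrow> nat \<Rightarrow> 'x list)
    \<Rightarrow> (nat \<Rightarrow> 'z list \<Rightarrow> nat) \<Rightarrow> nat \<Rightarrow> bool" where
  "valid_code b B Mn enc dec n \<longleftrightarrow>
     1 \<le> Mn n \<and>
     (\<forall>m\<in>{1..Mn n}. length (enc n m) = n \<and> (\<Sum>i<n. b (enc n m ! i)) / real n \<le> B) \<and>
     (\<forall>zs. dec n zs \<in> {1..Mn n})"

definition Pe :: "('x \<Rightarrow> 'z \<Rightarrow> real) \<Rightarrow> (nat \<Rightarrow> nat) \<Rightarrow> (nat \<Rightarrow> nat \<Rightarrow> 'x list)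
    \<Rightarrow> (nat \<Rightarrow> 'z list \<Rightarrow> nat) \<Rightarrow> nat \<Rightarrow> real" where
  "Pe P Mn enc dec n =
     Max ((\<lambda>m. \<Sum>zs\<in>{zs\<in>seqs n. dec n zs \<noteq> m}. prod_chan P (enc n m) zs) ` {1..Mn n})"

definition eps0 :: "('x \<Rightarrow> 'y \<Rightarrow> real) \<Rightarrow> (nat \<Rightarrow> 'y list \<Rightarrow> 'x list \<Rightarrow> bool) \<Rightarrow> nat \<Rightarrow> 'x list \<Rightarrow> real" where
  "eps0 W dsc n xs = (\<Sum>ys\<in>{ys\<in>seqs n. dsc n ys xs}. prod_chan W xs ys)"

definition eps1 :: "('x \<Rightarrow> 'y \<Rightarrow> real) \<Rightarrow> (nat \<Rightarrow> 'y list \<Rightarrow> 'x list \<Rightarrow> bool) \<Rightarrow> nat \<Rightarrow> 'x list \<Rightarrow> real" where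
  "eps1 V dsc n xs = (\<Sum>ys\<in>{ys\<in>seqs n. \<not> dsc n ys xs}. prod_chan V xs ys)"

definition eps0C where
  "eps0C W Mn enc dsc n = Max (eps0 W dsc n ` codebook Mn enc n)"

definition eps1C where
  "eps1C V Mn enc dsc n = Max (eps1 V dsc n ` codebook Mn enc n)"

definition achieves ::
  "('x::finite \<Rightarrow> 'z::finite \<Rightarrow> real) \<Rightarrow> ('x \<Rightarrow> 'y::finite \<Rightarrow> real) \<Rightarrow> ('x \<Rightarrow> 'y \<Rightarrow> real)
   \<Rightarrow> ('x \<Rightarrow> real) \<Rightarrow> real
   \<Rightarrow> (nat \<Rightarrow> nat) \<Rightarrow> (nat \<Rightarrow> nat \<Rightarrow> 'x list) \<Rightarrow> (nat \<Rightarrow> 'z list \<Rightarrow> nat)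
   \<Rightarrow> (nat \<Rightarrow> 'y list \<Rightarrow> 'x list \<Rightarrow> bool) \<Rightarrow> real \<Rightarrow> real \<Rightarrow> real \<Rightarrow> bool" where
  "achieves P W V b B Mn enc dec dsc R E0 E1 \<longleftrightarrow>
     (\<forall>n\<ge>1. valid_code b B Mn enc dec n) \<and>
     (\<exists>\<tau><1. \<forall>n\<ge>1. max (eps0C W Mn enc dsc n) (eps1C V Mn enc dsc n) \<le> \<tau>) \<and>
     (Pe P Mn enc dec \<longlonglongrightarrow> 0) \<and>
     liminf (\<lambda>n. ereal (ln (real (Mn n)) / real n)) = ereal R \<and>
     liminf (\<lambda>n. ereal (- ln (eps0C W Mn enc dsc n) / real n)) = ereal E0 \<and>
     liminf (\<lambda>n. ereal (- ln (eps1C V Mn enc dsc n) / real n)) = ereal E1"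

definition type_of :: "'x list \<Rightarrow> 'x \<Rightarrow> real" where
  "type_of xs a = real (length (filter (\<lambda>x. x = a) xs)) / real (length xs)"

definition constant_composition :: "(nat \<Rightarrow> nat) \<Rightarrow> (nat \<Rightarrow> nat \<Rightarrow> 'x list) \<Rightarrow> bool" where
  "constant_composition Mn enc \<longleftrightarrow>
     (\<forall>n\<ge>1. \<forall>xs\<in>codebook Mn enc n. \<forall>xs'\<in>codebook Mn enc n. type_of xs = type_of xs')"

end

theory Submission
  imports Defs
begin

definition pr :: "('x \<Rightarrow> 'y \<Rightarrow> real) \<Rightarrow> 'x list \<Rightarrow> 'y list set \<Rightarrow> real" where
  "pr Q xs S = (\<Sum>ys\<in>S. prod_chan Q xs ys)"

lemma finite_seqs: "finite (seqs n :: 'a::finite list set)"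
proof -
  have "seqs n = {xs :: 'a list. set xs \<subseteq> UNIV \<and> length xs = n}" by (auto simp: seqs_def)
  then show ?thesis using finite_lists_length_eq[of "UNIV :: 'a set" n] by simp
qed

lemma seqs_Suc: "seqs (Suc n) = (\<lambda>(y,ys). y # ys) ` (UNIV \<times> seqs n)"
  by (auto simp: seqs_def image_iff length_Suc_conv)

lemma prod_chan_Cons: "prod_chan Q (x#xs) (y#ys) = Q x y * prod_chan Q xs ys"
  unfolding prod_chan_def by (simp only: length_Cons prod.lessThan_Suc_shift) simp

lemma prod_chan_nonneg: "is_channel Q \<Longrightarrow> 0 \<le> prod_chan Q xs ys"
  by (auto simp: prod_chan_def is_channel_def intro!: prod_nonneg)

lemma cyl_sum:
  fixes Q :: "'x::finite \<Rightarrow> 'y::finite \<Rightarrow> real"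
  assumes ch: "is_channel Q"
  shows "length xs = n \<Longrightarrow> k \<le> n \<Longrightarrow>
    (\<Sum>ys\<in>{ys\<in>seqs n. \<forall>i<k. ys!i = c i}. prod_chan Q xs ys) = (\<Prod>i<k. Q (xs!i) (c i))"
proof (induction xs arbitrary: n k c)
  case Nil
  then have "{ys\<in>seqs n. \<forall>i<k. ys!i = c i} = {[]}" by (auto simp: seqs_def)
  then show ?case using Nil by (simp add: prod_chan_def)
next
  case (Cons x xs)
  then obtain m where m: "n = Suc m" "length xs = m" by auto
  define Y0 where "Y0 = {y. 0 < k \<longrightarrow> y = c 0}"
  define R where "R = {ys\<in>seqs m. \<forall>i<k-1. ys!i = c (Suc i)}"
  have eq: "{ys\<in>seqs n. \<forall>i<k. ys!i = c i} = (\<lambda>(y,ys). y # ys) ` (Y0 \<times> R)"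
  proof (rule set_eqI)
    fix zs
    show "zs \<in> {ys\<in>seqs n. \<forall>i<k. ys!i = c i} \<longleftrightarrow> zs \<in> (\<lambda>(y,ys). y # ys) ` (Y0 \<times> R)"
    proof
      assume a: "zs \<in> {ys\<in>seqs n. \<forall>i<k. ys!i = c i}"
      then obtain y ys where z: "zs = y # ys" "length ys = m" using m by (auto simp: seqs_def length_Suc_conv)
      have "y \<in> Y0" using a z by (auto simp: Y0_def)
      moreover have "ys \<in> R"
      proof -
        have "ys ! i = c (Suc i)" if "i < k - 1" for i
          using a z that spec[of "\<lambda>i. i < k \<longrightarrow> zs ! i = c i" "Suc i"] by auto
        then show ?thesis using z by (auto simp: R_def seqs_def)
      qed
      ultimately show "zs \<in> (\<lambda>(y,ys). y # ys) ` (Y0 \<times> R)" using z by auto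
    next
      assume "zs \<in> (\<lambda>(y,ys). y # ys) ` (Y0 \<times> R)"
      then obtain y ys where z: "zs = y # ys" "y \<in> Y0" "ys \<in> R" by auto
      have "\<forall>i<k. zs!i = c i"
      proof (intro allI impI)
        fix i assume "i < k"
        then show "zs ! i = c i" using z by (cases i) (auto simp: Y0_def R_def)
      qed
      then show "zs \<in> {ys\<in>seqs n. \<forall>i<k. ys!i = c i}" using z m by (auto simp: R_def seqs_def)
    qed
  qed
  have inj: "inj_on (\<lambda>(y,ys). y # ys) (Y0 \<times> R)" by (auto simp: inj_on_def)
  have finR: "finite R" using finite_seqs[of m] by (auto simp: R_def)
  have "(\<Sum>ys\<in>{ys\<in>seqs n. \<forall>i<k. ys!i = c i}. prod_chan Q (x#xs) ys)
      = (\<Sum>p\<in>Y0 \<times> R. prod_chan Q (x#xs) (fst p # snd p))"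
    unfolding eq by (subst sum.reindex[OF inj]) (auto intro!: sum.cong simp: case_prod_beta)
  also have "\<dots> = (\<Sum>p\<in>Y0 \<times> R. Q x (fst p) * prod_chan Q xs (snd p))"
    by (simp add: prod_chan_Cons)
  also have "\<dots> = (\<Sum>y\<in>Y0. Q x y) * (\<Sum>ys\<in>R. prod_chan Q xs ys)"
    by (simp add: sum_product sum.cartesian_product case_prod_beta)
  also have "(\<Sum>ys\<in>R. prod_chan Q xs ys) = (\<Prod>i<k-1. Q (xs!i) (c (Suc i)))"
    unfolding R_def using Cons.IH[of m "k-1" "\<lambda>i. c (Suc i)"] Cons.prems m by simp
  also have "(\<Sum>y\<in>Y0. Q x y) = (if k = 0 then 1 else Q x (c 0))"
  proof (cases "k = 0")
    case True
    then have "Y0 = UNIV" by (auto simp: Y0_def)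
    then show ?thesis using ch True by (simp add: is_channel_def)
  next
    case False
    then have "Y0 = {c 0}" by (auto simp: Y0_def)
    then show ?thesis using False by simp
  qed
  also have "(if k = 0 then 1 else Q x (c 0)) * (\<Prod>i<k-1. Q (xs!i) (c (Suc i)))
     = (\<Prod>i<k. Q ((x#xs)!i) (c i))"
  proof (cases k)
    case 0 then show ?thesis by simp
  next
    case (Suc j) then show ?thesis by (simp only: prod.lessThan_Suc_shift) simp
  qed
  finally show ?case .
qed

lemma total_sum:
  fixes Q :: "'x::finite \<Rightarrow> 'y::finite \<Rightarrow> real"
  assumes "is_channel Q" "length xs = n"
  shows "pr Q xs (seqs n) = 1"
  using cyl_sum[OF assms(1) assms(2), of 0 "\<lambda>_. undefined"] by (simp add: pr_def)

lemma pr_nonneg: "is_channel Q \<Longrightarrow> 0 \<le> pr Q xs S"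
  unfolding pr_def by (auto intro!: sum_nonneg prod_chan_nonneg)

lemma pr_mono: "is_channel Q \<Longrightarrow> S \<subseteq> T \<Longrightarrow> finite T \<Longrightarrow> pr Q xs S \<le> pr Q xs T"
  unfolding pr_def by (rule sum_mono2) (auto intro!: prod_chan_nonneg)

lemma pr_union_le: "is_channel Q \<Longrightarrow> finite S \<Longrightarrow> finite T \<Longrightarrow> pr Q xs (S \<union> T) \<le> pr Q xs S + pr Q xs T"
  unfolding pr_def using sum_Un[of S T "prod_chan Q xs"]
  by (simp add: sum_nonneg prod_chan_nonneg)

lemma prod_chan_pos: "\<forall>x y. 0 < Q x y \<Longrightarrow> 0 < prod_chan Q xs ys"
  by (auto simp: prod_chan_def intro!: prod_pos)

lemma pr_pos: "is_channel Q \<Longrightarrow> \<forall>x y. 0 < Q x y \<Longrightarrow> finite S \<Longrightarrow> S \<noteq> {} \<Longrightarrow> 0 < pr Q xs S"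
  unfolding pr_def by (rule sum_pos) (auto intro!: prod_chan_pos)

lemma pr_compl:
  fixes Q :: "'x::finite \<Rightarrow> 'y::finite \<Rightarrow> real"
  assumes "is_channel Q" "length xs = n" "S \<subseteq> seqs n"
  shows "pr Q xs (seqs n - S) = 1 - pr Q xs S"
  using total_sum[OF assms(1,2)] sum_diff[of "seqs n" S "prod_chan Q xs"] assms(3) finite_seqs[of n]
  by (simp add: pr_def)

lemma chan_le1:
  fixes Q :: "'x::finite \<Rightarrow> 'y::finite \<Rightarrow> real"
  assumes "is_channel Q" shows "Q x y \<le> 1"
proof -
  have "Q x y \<le> (\<Sum>y\<in>UNIV. Q x y)"
    using assms by (intro member_le_sum) (auto simp: is_channel_def)
  then show ?thesis using assms by (simp add: is_channel_def)
qed

lemma test_exists: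
  fixes Q :: "'x::finite \<Rightarrow> 'y::finite \<Rightarrow> real"
  assumes ch: "is_channel Q" and qpos: "0 < q" and qle: "\<forall>x y. q \<le> Q x y"
    and len: "length xs = n" and A0: "A0 \<subseteq> seqs n" and pA0: "0 < pr Q xs A0"
    and t: "0 < t" "t < 1"
  shows "\<exists>S \<subseteq> seqs n. pr Q xs S \<le> t \<and> q * t \<le> pr Q xs (A0 \<union> S)"
proof -
  have "\<forall>x. \<exists>y0. \<forall>y. Q x y0 \<le> Q x y"
  proof
    fix x
    have "Min (range (Q x)) \<in> range (Q x)" by (rule Min_in) auto
    then obtain y0 where "Q x y0 = Min (range (Q x))" by (metis rangeE)
    then show "\<exists>y0. \<forall>y. Q x y0 \<le> Q x y" by (metis Min_le finite rangeI finite_imageI)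
  qed
  then obtain ymin where ymin: "\<And>x y. Q x (ymin x) \<le> Q x y" by metis
  define c where "c i = ymin (xs ! i)" for i
  define Wc where "Wc k = (\<Prod>i<k. Q (xs!i) (c i))" for k
  define cyl where "cyl k = {ys\<in>seqs n. \<forall>i<k. ys!i = c i}" for k
  have prcyl: "pr Q xs (cyl k) = Wc k" if "k \<le> n" for k
    using cyl_sum[OF ch len that, of c] by (simp add: pr_def cyl_def Wc_def)
  have finA0: "finite A0" using A0 finite_seqs finite_subset by blast
  have q1: "q \<le> 1" using qle chan_le1[OF ch] order_trans by blast
  show ?thesis
  proof (cases "\<exists>k\<le>n. Wc k \<le> t")
    case True
    define K where "K = (LEAST k. k \<le> n \<and> Wc k \<le> t)"
    have K: "K \<le> n" "Wc K \<le> t" using LeastI_ex[OF True[unfolded Bex_def[symmetric]]] True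
      unfolding K_def by (metis (mono_tags, lifting) LeastI_ex)+
    have "K \<noteq> 0"
    proof
      assume "K = 0" then have "Wc K = 1" by (simp add: Wc_def)
      then show False using K t by simp
    qed
    then obtain j where j: "K = Suc j" by (cases K) auto
    have "\<not> (j \<le> n \<and> Wc j \<le> t)" using not_less_Least[of j "\<lambda>k. k \<le> n \<and> Wc k \<le> t"] j
      unfolding K_def by auto
    then have Wj: "t < Wc j" using K j by auto
    have "Wc K = Wc j * Q (xs!j) (c j)" using j by (simp add: Wc_def)
    also have "\<dots> \<ge> Wc j * q" using qle Wj t by (intro mult_left_mono) auto
    finally have "q * t \<le> Wc K" using Wj qpos by (smt (verit) mult.commute mult_strict_left_mono)
    moreover have "pr Q xs (cyl K) \<le> pr Q xs (A0 \<union> cyl K)"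
      by (rule pr_mono[OF ch]) (use finA0 finite_seqs[of n] in \<open>auto simp: cyl_def\<close>)
    moreover have "cyl K \<subseteq> seqs n" by (auto simp: cyl_def)
    ultimately show ?thesis using prcyl[OF K(1)] K(2) by (intro exI[of _ "cyl K"]) auto
  next
    case False
    then have Wn: "t < Wc n" by auto
    from pA0 have "A0 \<noteq> {}" by (auto simp: pr_def)
    then obtain ys0 where ys0: "ys0 \<in> A0" by auto
    have "Wc n \<le> prod_chan Q xs ys0"
      unfolding Wc_def prod_chan_def len c_def
      using ch ymin by (intro prod_mono) (auto simp: is_channel_def)
    also have "\<dots> \<le> pr Q xs A0"
      unfolding pr_def using finA0 ys0 ch by (intro member_le_sum) (auto intro: prod_chan_nonneg)
    finally have "t < pr Q xs A0" using Wn by simp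
    moreover have "q * t \<le> t" using q1 t by (simp add: mult_left_le_one_le)
    ultimately have "q * t \<le> pr Q xs (A0 \<union> {})" by simp
    then show ?thesis using t by (intro exI[of _ "{}"]) (auto simp: pr_def)
  qed
qed

lemma liminf_eqI:
  fixes f :: "nat \<Rightarrow> real"
  assumes ev: "\<And>\<epsilon>. \<epsilon> > 0 \<Longrightarrow> eventually (\<lambda>n. E - \<epsilon> < f n) sequentially"
    and fr: "\<And>\<epsilon>. \<epsilon> > 0 \<Longrightarrow> frequently (\<lambda>n. f n < E + \<epsilon>) sequentially"
  shows "liminf (\<lambda>n. ereal (f n)) = ereal E"
proof (rule antisym)
  show "ereal E \<le> liminf (\<lambda>n. ereal (f n))"
    unfolding le_Liminf_iff
  proof (intro allI impI)
    fix y :: ereal assume "y < ereal E"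
    show "eventually (\<lambda>n. y < ereal (f n)) sequentially"
    proof (cases y)
      case (real r)
      then have "E - (E - r) = r" "E - r > 0" using \<open>y < ereal E\<close> by auto
      then show ?thesis using ev[of "E - r"] real by (auto elim: eventually_mono)
    next
      case PInf then show ?thesis using \<open>y < ereal E\<close> by auto
    next
      case MInf then show ?thesis by auto
    qed
  qed
next
  show "liminf (\<lambda>n. ereal (f n)) \<le> ereal E"
  proof (rule ccontr)
    assume "\<not> ?thesis"
    then have "ereal E < liminf (\<lambda>n. ereal (f n))" by simp
    then obtain r :: real where r: "ereal E < ereal r" "ereal r < liminf (\<lambda>n. ereal (f n))"
      using ereal_dense2 by blast
    have all: "\<forall>y<ereal r. eventually (\<lambda>n. y < ereal (f n)) sequentially"
      using r(2) le_Liminf_iff[of "ereal r" sequentially "\<lambda>n. ereal (f n)"] by (simp add: less_imp_le)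
    have "ereal ((E + r)/2) < ereal r" using r(1) by simp
    then have "eventually (\<lambda>n. ereal ((E + r)/2) < ereal (f n)) sequentially"
      using all by blast
    note evf = this
    have frf: "frequently (\<lambda>n. f n < E + (r - E)/2) sequentially" using r by (intro fr) auto
    have "frequently (\<lambda>n. ereal ((E + r)/2) < ereal (f n) \<and> f n < E + (r - E)/2) sequentially"
      using frequently_eventually_conj[OF frf evf] .
    then have "frequently (\<lambda>n. False) sequentially"
      by (rule frequently_elim1) (simp add: field_simps, linarith)
    then show False by simp
  qed
qed

lemma liminf_eqD1:
  fixes f :: "nat \<Rightarrow> real"
  assumes "liminf (\<lambda>n. ereal (f n)) = ereal E" "\<epsilon> > 0"
  shows "eventually (\<lambda>n. E - \<epsilon> < f n) sequentially"
proof -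
  have "ereal E \<le> liminf (\<lambda>n. ereal (f n))" using assms by simp
  then have all: "\<forall>y<ereal E. eventually (\<lambda>n. y < ereal (f n)) sequentially"
    unfolding le_Liminf_iff .
  have "ereal (E - \<epsilon>) < ereal E" using assms(2) by simp
  then have "eventually (\<lambda>n. ereal (E - \<epsilon>) < ereal (f n)) sequentially"
    using all by blast
  then show ?thesis by simp
qed

lemma liminf_eqD2:
  fixes f :: "nat \<Rightarrow> real"
  assumes "liminf (\<lambda>n. ereal (f n)) = ereal E" "\<epsilon> > 0"
  shows "frequently (\<lambda>n. f n < E + \<epsilon>) sequentially"
proof (rule ccontr)
  assume "\<not> ?thesis"
  then have "eventually (\<lambda>n. ereal (E + \<epsilon>) \<le> ereal (f n)) sequentially"
    unfolding frequently_def by (auto elim: eventually_mono)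
  then have "ereal (E + \<epsilon>) \<le> liminf (\<lambda>n. ereal (f n))" by (rule Liminf_bounded)
  then show False using assms by simp
qed

lemma interleave:
  fixes p q :: "nat \<Rightarrow> real"
  assumes p: "\<And>\<epsilon>. \<epsilon> > 0 \<Longrightarrow> frequently (\<lambda>n. p n < \<epsilon>) sequentially"
    and q: "\<And>\<epsilon>. \<epsilon> > 0 \<Longrightarrow> frequently (\<lambda>n. q n < \<epsilon>) sequentially"
  shows "\<exists>N0. (\<forall>\<epsilon>>0. frequently (\<lambda>n. n \<in> N0 \<and> p n < \<epsilon>) sequentially)
            \<and> (\<forall>\<epsilon>>0. frequently (\<lambda>n. n \<notin> N0 \<and> q n < \<epsilon>) sequentially)"
proof -
  have pp: "\<exists>n>m. p n < 1 / (real k + 1)" for m k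
  proof -
    have "frequently (\<lambda>n. p n < 1 / (real k + 1)) sequentially" by (rule p) simp
    then obtain n where "n \<ge> Suc m" "p n < 1 / (real k + 1)" unfolding frequently_sequentially by blast
    then show ?thesis by (intro exI[of _ n]) auto
  qed
  have qq: "\<exists>n>m. q n < 1 / (real k + 1)" for m k
  proof -
    have "frequently (\<lambda>n. q n < 1 / (real k + 1)) sequentially" by (rule q) simp
    then obtain n where "n \<ge> Suc m" "q n < 1 / (real k + 1)" unfolding frequently_sequentially by blast
    then show ?thesis by (intro exI[of _ n]) auto
  qed
  define nx where "nx m k = (if even k then (SOME n. n > m \<and> p n < 1 / (real k + 1))
                            else (SOME n. n > m \<and> q n < 1 / (real k + 1)))" for m k
  define s where "s = rec_nat (0::nat) (\<lambda>k sk. nx sk k)"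
  have s0: "s 0 = 0" and sS: "s (Suc k) = nx (s k) k" for k by (simp_all add: s_def)
  have nxp: "even k \<Longrightarrow> nx m k > m \<and> p (nx m k) < 1 / (real k + 1)" for m k
    unfolding nx_def using someI_ex[OF pp[of m k]] by simp
  have nxq: "odd k \<Longrightarrow> nx m k > m \<and> q (nx m k) < 1 / (real k + 1)" for m k
    unfolding nx_def using someI_ex[OF qq[of m k]] by simp
  have smono: "strict_mono s"
  proof (rule strict_monoI_Suc)
    fix k show "s k < s (Suc k)" using nxp[of k "s k"] nxq[of k "s k"] sS[of k] by (cases "even k") auto
  qed
  have sge: "k \<le> s k" for k using smono by (rule strict_mono_imp_increasing)
  define N0 where "N0 = {s (Suc k) | k. even k}"
  have P1: "frequently (\<lambda>n. n \<in> N0 \<and> p n < \<epsilon>) sequentially" if e: "\<epsilon> > 0" for \<epsilon>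
    unfolding frequently_sequentially
  proof
    fix N
    obtain k0 :: nat where k0: "1 / \<epsilon> < real k0" using reals_Archimedean2 by blast
    define k where "k = 2 * (N + k0)"
    have ek: "even k" by (simp add: k_def)
    have "1 / (real k + 1) < \<epsilon>"
    proof -
      have "1 / \<epsilon> < real k + 1" using k0 by (simp add: k_def)
      then show ?thesis using e by (simp add: field_simps)
    qed
    moreover have "p (s (Suc k)) < 1 / (real k + 1)" using nxp[OF ek, of "s k"] sS[of k] by simp
    moreover have "N \<le> s (Suc k)" using sge[of "Suc k"] by (simp add: k_def)
    moreover have "s (Suc k) \<in> N0" using ek by (auto simp: N0_def)
    ultimately show "\<exists>n\<ge>N. n \<in> N0 \<and> p n < \<epsilon>" by force
  qed
  have P2: "frequently (\<lambda>n. n \<notin> N0 \<and> q n < \<epsilon>) sequentially" if e: "\<epsilon> > 0" for \<epsilon>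
    unfolding frequently_sequentially
  proof
    fix N
    obtain k0 :: nat where k0: "1 / \<epsilon> < real k0" using reals_Archimedean2 by blast
    define k where "k = 2 * (N + k0) + 1"
    have ek: "odd k" by (simp add: k_def)
    have "1 / (real k + 1) < \<epsilon>"
    proof -
      have "1 / \<epsilon> < real k + 1" using k0 by (simp add: k_def)
      then show ?thesis using e by (simp add: field_simps)
    qed
    moreover have "q (s (Suc k)) < 1 / (real k + 1)" using nxq[OF ek, of "s k"] sS[of k] by simp
    moreover have "N \<le> s (Suc k)" using sge[of "Suc k"] by (simp add: k_def)
    moreover have "s (Suc k) \<notin> N0"
    proof
      assume "s (Suc k) \<in> N0"
      then obtain k' where "even k'" "s (Suc k) = s (Suc k')" by (auto simp: N0_def)
      then have "Suc k = Suc k'" using strict_mono_eq[OF smono] by metis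
      then show False using ek \<open>even k'\<close> by simp
    qed
    ultimately show "\<exists>n\<ge>N. n \<notin> N0 \<and> q n < \<epsilon>" by force
  qed
  show ?thesis using P1 P2 by blast
qed

lemma ln_over_n: "(\<lambda>n. ln (real n + 1) / real n) \<longlonglongrightarrow> 0"
proof (rule tendsto_sandwich[of "\<lambda>_. 0" _ _ "\<lambda>n. ln 2 / real n + ln (real n) / real n"])
  show "eventually (\<lambda>n. 0 \<le> ln (real n + 1) / real n) sequentially" by simp
  show "eventually (\<lambda>n. ln (real n + 1) / real n \<le> ln 2 / real n + ln (real n) / real n) sequentially"
    using eventually_ge_at_top[of "1::nat"]
  proof (rule eventually_mono)
    fix n :: nat assume n: "1 \<le> n"
    have "ln (real n + 1) \<le> ln (2 * real n)" using n by (subst ln_le_cancel_iff) auto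
    also have "\<dots> = ln 2 + ln (real n)" using n by (simp add: ln_mult)
    finally show "ln (real n + 1) / real n \<le> ln 2 / real n + ln (real n) / real n"
      using n by (simp add: add_divide_distrib[symmetric] divide_right_mono)
  qed
  show "(\<lambda>n. 0) \<longlonglongrightarrow> (0::real)" by simp
  show "(\<lambda>n. ln 2 / real n + ln (real n) / real n) \<longlonglongrightarrow> 0"
    using tendsto_add[OF tendsto_divide_0[OF tendsto_const filterlim_at_top_imp_at_infinity[OF filterlim_real_sequentially]] lim_ln_over_n]
    by simp
qed

lemma exp_transfer:
  fixes f g hA hB :: "nat \<Rightarrow> real"
  assumes lim: "liminf (\<lambda>n. ereal (g n)) = ereal E"
    and lo: "\<And>n. n \<ge> 1 \<Longrightarrow> g n - hA n \<le> f n" and hA: "hA \<longlonglongrightarrow> 0"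
    and up: "\<And>n. n \<ge> 1 \<Longrightarrow> n \<in> NN \<Longrightarrow> f n \<le> g n + hB n" and hB: "hB \<longlonglongrightarrow> 0"
    and fr: "\<And>\<epsilon>. \<epsilon> > 0 \<Longrightarrow> frequently (\<lambda>n. n \<in> NN \<and> g n - E < \<epsilon>) sequentially"
  shows "liminf (\<lambda>n. ereal (f n)) = ereal E"
proof (rule liminf_eqI)
  fix \<epsilon> :: real assume e: "\<epsilon> > 0"
  have "eventually (\<lambda>n. E - \<epsilon>/2 < g n) sequentially" using liminf_eqD1[OF lim] e by simp
  moreover have "eventually (\<lambda>n. hA n < \<epsilon>/2) sequentially" using order_tendstoD(2)[OF hA, of "\<epsilon>/2"] e by simp
  moreover have "eventually (\<lambda>n. (1::nat) \<le> n) sequentially" by (rule eventually_ge_at_top)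
  ultimately show "eventually (\<lambda>n. E - \<epsilon> < f n) sequentially"
  proof eventually_elim
    case (elim n) then show ?case using lo[of n] by linarith
  qed
next
  fix \<epsilon> :: real assume e: "\<epsilon> > 0"
  have F: "frequently (\<lambda>n. n \<in> NN \<and> g n - E < \<epsilon>/2) sequentially" using fr[of "\<epsilon>/2"] e by simp
  have "eventually (\<lambda>n. hB n < \<epsilon>/2) sequentially" using order_tendstoD(2)[OF hB, of "\<epsilon>/2"] e by simp
  moreover have "eventually (\<lambda>n. (1::nat) \<le> n) sequentially" by (rule eventually_ge_at_top)
  ultimately have Ev: "eventually (\<lambda>n. hB n < \<epsilon>/2 \<and> 1 \<le> n) sequentially" by eventually_elim auto
  show "frequently (\<lambda>n. f n < E + \<epsilon>) sequentially"
    using frequently_eventually_conj[OF F Ev]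
  proof (rule frequently_elim1)
    fix n assume "(hB n < \<epsilon> / 2 \<and> 1 \<le> n) \<and> n \<in> NN \<and> g n - E < \<epsilon> / 2"
    then show "f n < E + \<epsilon>" using up[of n] by linarith
  qed
qed

lemma ln_lo:
  fixes x y K :: real and n :: nat
  assumes "0 < x" "0 < y" "0 < K" "x \<le> K * y"
  shows "- ln y / real n - ln K / real n \<le> - ln x / real n"
proof -
  have "ln x \<le> ln (K * y)" using assms by simp
  also have "\<dots> = ln K + ln y" using assms by (simp add: ln_mult)
  finally have "- ln y - ln K \<le> - ln x" by simp
  then have "(- ln y - ln K) / real n \<le> - ln x / real n" by (rule divide_right_mono) simp
  then show ?thesis by (simp add: diff_divide_distrib)
qed

lemma ln_up:
  fixes x y K :: real and n :: nat
  assumes "0 < x" "0 < y" "0 < K" "K * y \<le> x"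
  shows "- ln x / real n \<le> - ln y / real n + - ln K / real n"
proof -
  have "ln (K * y) \<le> ln x" using assms by (subst ln_le_cancel_iff) auto
  moreover have "ln (K * y) = ln K + ln y" using assms by (simp add: ln_mult)
  ultimately have "- ln x \<le> - ln y + - ln K" by simp
  then have "- ln x / real n \<le> (- ln y + - ln K) / real n" by (rule divide_right_mono) simp
  then show ?thesis by (simp add: add_divide_distrib diff_divide_distrib)
qed

lemma const_over_n: "(\<lambda>n. C / real n) \<longlonglongrightarrow> 0"
  by (rule tendsto_divide_0[OF tendsto_const filterlim_at_top_imp_at_infinity[OF filterlim_real_sequentially]])

lemma const_over_n2: "(\<lambda>n. - (C / real n)) \<longlonglongrightarrow> 0"
  using tendsto_minus[OF const_over_n[of C]] by simp

definition cnt :: "'x list \<Rightarrow> 'x \<Rightarrow> nat" where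
  "cnt xs = (\<lambda>a. length (filter (\<lambda>x. x = a) xs))"

lemma type_pigeonhole:
  fixes enc :: "nat \<Rightarrow> 'x::finite list" and M n :: nat
  assumes M: "M \<ge> 1" and len: "\<forall>m\<in>{1..M}. length (enc m) = n"
  shows "\<exists>S \<subseteq> {1..M}. S \<noteq> {} \<and> (\<forall>m\<in>S. \<forall>m'\<in>S. cnt (enc m) = cnt (enc m'))
           \<and> real M \<le> (real n + 1) ^ CARD('x) * real (card S)"
proof -
  define F where "F = (\<lambda>m. cnt (enc m)) ` {1..M}"
  define fib where "fib f = {m\<in>{1..M}. cnt (enc m) = f}" for f
  have FP: "F \<subseteq> Pi UNIV (\<lambda>_. {..n})"
    using len by (auto simp: F_def cnt_def intro: order_trans[OF length_filter_le])
  have cardP: "card (Pi UNIV (\<lambda>_::'x. {..n})) = (n + 1) ^ CARD('x)"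
    using card_PiE[of "UNIV :: 'x set" "\<lambda>_. {..n}"] by (simp add: PiE_UNIV_domain)
  have finP: "finite (Pi UNIV (\<lambda>_::'x. {..n}))"
    using finite_PiE[of "UNIV :: 'x set" "\<lambda>_. {..n}"] by (simp add: PiE_UNIV_domain)
  have cardF: "card F \<le> (n + 1) ^ CARD('x)" using card_mono[OF finP FP] cardP by simp
  have finF: "finite F" by (simp add: F_def)
  have Fne: "F \<noteq> {}" using M by (auto simp: F_def)
  have U: "{1..M} = (\<Union>f\<in>F. fib f)" by (auto simp: F_def fib_def)
  have "card {1..M} = (\<Sum>f\<in>F. card (fib f))"
    unfolding U by (rule card_UN_disjoint) (auto simp: finF fib_def)
  obtain f0 where f0: "f0 \<in> F" "\<forall>f\<in>F. card (fib f) \<le> card (fib f0)"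
  proof -
    have "Max ((\<lambda>f. card (fib f)) ` F) \<in> (\<lambda>f. card (fib f)) ` F" using finF Fne by (intro Max_in) auto
    then obtain f0 where "f0 \<in> F" "card (fib f0) = Max ((\<lambda>f. card (fib f)) ` F)" by auto
    moreover have "\<forall>f\<in>F. card (fib f) \<le> Max ((\<lambda>f. card (fib f)) ` F)" using finF by auto
    ultimately show ?thesis using that by metis
  qed
  have "(\<Sum>f\<in>F. card (fib f)) \<le> card F * card (fib f0)"
    using f0 sum_bounded_above[of F "\<lambda>f. card (fib f)" "card (fib f0)"] by auto
  also have "\<dots> \<le> (n + 1) ^ CARD('x) * card (fib f0)" using cardF by simp
  finally have "M \<le> (n + 1) ^ CARD('x) * card (fib f0)" using \<open>card {1..M} = _\<close> by simp
  then have "real M \<le> real ((n + 1) ^ CARD('x) * card (fib f0))" by linarith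
  then have R: "real M \<le> (real n + 1) ^ CARD('x) * real (card (fib f0))" by (simp add: add.commute)
  have "fib f0 \<noteq> {}" using f0(1) by (auto simp: F_def fib_def)
  moreover have "fib f0 \<subseteq> {1..M}" by (auto simp: fib_def)
  moreover have "\<forall>m\<in>fib f0. \<forall>m'\<in>fib f0. cnt (enc m) = cnt (enc m')" by (auto simp: fib_def)
  ultimately show ?thesis using R by blast
qed

lemma type_of_cnt: "type_of xs = (\<lambda>a. real (cnt xs a) / real (length xs))"
  by (simp add: type_of_def cnt_def fun_eq_iff)

theorem lemma2:
  fixes P :: "'x::finite \<Rightarrow> 'z::finite \<Rightarrow> real"
    and W V :: "'x \<Rightarrow> 'y::finite \<Rightarrow> real"
    and b :: "'x \<Rightarrow> real" and B :: real
    and Mn :: "nat \<Rightarrow> nat" and enc :: "nat \<Rightarrow> nat \<Rightarrow> 'x list"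
    and dec :: "nat \<Rightarrow> 'z list \<Rightarrow> nat" and dsc :: "nat \<Rightarrow> 'y list \<Rightarrow> 'x list \<Rightarrow> bool"
    and R E0 E1 :: real
  assumes "is_channel P" and "is_channel W" and "is_channel V"
    and "\<forall>x y. W x y * V x y \<noteq> 0"
    and "\<forall>x. 0 \<le> b x" and "0 \<le> B"
    and "achieves P W V b B Mn enc dec dsc R E0 E1"
  shows "\<exists>Mn' enc' dec' dsc'. achieves P W V b B Mn' enc' dec' dsc' R E0 E1
           \<and> constant_composition Mn' enc'"
proof -
  note chP = assms(1) and chW = assms(2) and chV = assms(3)
  have valid: "\<And>n. n \<ge> 1 \<Longrightarrow> valid_code b B Mn enc dec n"
    and PeT: "Pe P Mn enc dec \<longlonglongrightarrow> 0"
    and limR: "liminf (\<lambda>n. ereal (ln (real (Mn n)) / real n)) = ereal R"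
    and lim0: "liminf (\<lambda>n. ereal (- ln (eps0C W Mn enc dsc n) / real n)) = ereal E0"
    and lim1: "liminf (\<lambda>n. ereal (- ln (eps1C V Mn enc dsc n) / real n)) = ereal E1"
    using assms(7) by (auto simp: achieves_def)
  obtain \<tau> where tau: "\<tau> < 1" "\<And>n. n \<ge> 1 \<Longrightarrow> max (eps0C W Mn enc dsc n) (eps1C V Mn enc dsc n) \<le> \<tau>"
    using assms(7) by (auto simp: achieves_def)
  have Wpos: "\<forall>x y. 0 < W x y" using chW assms(4) by (auto simp: is_channel_def order_le_less)
  have Vpos: "\<forall>x y. 0 < V x y" using chV assms(4) by (auto simp: is_channel_def order_le_less)
  define w where "w = Min (range (\<lambda>p::'x\<times>'y. W (fst p) (snd p)))"
  have w: "0 < w" "\<forall>x y. w \<le> W x y"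
  proof -
    have "w \<in> range (\<lambda>p::'x\<times>'y. W (fst p) (snd p))" unfolding w_def by (rule Min_in) auto
    then show "0 < w" using Wpos by auto
    show "\<forall>x y. w \<le> W x y"
    proof (intro allI)
      fix x y
      have "W x y \<in> range (\<lambda>p::'x\<times>'y. W (fst p) (snd p))" by (rule range_eqI[of _ _ "(x,y)"]) simp
      then show "w \<le> W x y" unfolding w_def by (intro Min_le) auto
    qed
  qed
  define v where "v = Min (range (\<lambda>p::'x\<times>'y. V (fst p) (snd p)))"
  have v: "0 < v" "\<forall>x y. v \<le> V x y"
  proof -
    have "v \<in> range (\<lambda>p::'x\<times>'y. V (fst p) (snd p))" unfolding v_def by (rule Min_in) auto
    then show "0 < v" using Vpos by auto
    show "\<forall>x y. v \<le> V x y"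
    proof (intro allI)
      fix x y
      have "V x y \<in> range (\<lambda>p::'x\<times>'y. V (fst p) (snd p))" by (rule range_eqI[of _ _ "(x,y)"]) simp
      then show "v \<le> V x y" unfolding v_def by (intro Min_le) auto
    qed
  qed
  define a where "a n = eps0C W Mn enc dsc n" for n
  define c where "c n = eps1C V Mn enc dsc n" for n
  define cb where "cb n = codebook Mn enc n" for n
  have cbfin: "finite (cb n)" for n by (simp add: cb_def codebook_def)
  have cbne: "cb n \<noteq> {}" if "n \<ge> 1" for n
    using valid[OF that] by (auto simp: cb_def codebook_def valid_code_def)
  have cblen: "length x = n" if "n \<ge> 1" "x \<in> cb n" for n x
    using valid[OF that(1)] that(2) by (auto simp: cb_def codebook_def valid_code_def)
  have a_ge: "eps0 W dsc n x \<le> a n" if "x \<in> cb n" for n x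
    unfolding a_def eps0C_def using that cbfin[of n] by (simp add: cb_def)
  have c_ge: "eps1 V dsc n x \<le> c n" if "x \<in> cb n" for n x
    unfolding c_def eps1C_def using that cbfin[of n] by (simp add: cb_def)
  have a_le: "a n \<le> \<tau>" and c_le: "c n \<le> \<tau>" if "n \<ge> 1" for n
    using tau(2)[OF that] by (auto simp: a_def c_def)
  define A0 where "A0 n x = {ys\<in>seqs n. dsc n ys x}" for n x
  have A0sub: "A0 n x \<subseteq> seqs n" for n x by (auto simp: A0_def)
  have e0_eq: "eps0 W dsc n x = pr W x (A0 n x)" for n x by (simp add: eps0_def pr_def A0_def)
  have e1_eq: "eps1 V dsc n x = pr V x (seqs n - A0 n x)" for n x
  proof -
    have "{ys\<in>seqs n. \<not> dsc n ys x} = seqs n - A0 n x" by (auto simp: A0_def)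
    then show ?thesis by (simp add: eps1_def pr_def)
  qed
  have pos0: "0 < pr W x (A0 n x)" if "n \<ge> 1" "x \<in> cb n" for n x
  proof (cases "A0 n x = {}")
    case True
    then have "pr V x (seqs n - A0 n x) = 1" using total_sum[OF chV cblen[OF that]] by simp
    then show ?thesis using c_ge[OF that(2)] c_le[OF that(1)] tau(1) e1_eq by simp
  next
    case False
    then show ?thesis using pr_pos[OF chW Wpos] finite_subset[OF A0sub finite_seqs] by blast
  qed
  have pos1: "0 < pr V x (seqs n - A0 n x)" if "n \<ge> 1" "x \<in> cb n" for n x
  proof (cases "seqs n - A0 n x = {}")
    case True
    then have "A0 n x = seqs n" using A0sub by blast
    then have "pr W x (A0 n x) = 1" using total_sum[OF chW cblen[OF that]] by simp
    then show ?thesis using a_ge[OF that(2)] a_le[OF that(1)] tau(1) e0_eq by simp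
  next
    case False
    then show ?thesis using pr_pos[OF chV Vpos] finite_seqs[of n] by blast
  qed
  have apos: "0 < a n" and cpos: "0 < c n" if n1: "n \<ge> 1" for n
  proof -
    obtain x where x: "x \<in> cb n" using cbne[OF n1] by auto
    show "0 < a n" using pos0[OF n1 x] a_ge[OF x] e0_eq[of n x] by linarith
    show "0 < c n" using pos1[OF n1 x] c_ge[OF x] e1_eq[of n x] by linarith
  qed
  define t0 where "t0 n = a n * (1 - \<tau>) / 2" for n
  define t1 where "t1 n = c n * (1 - \<tau>) / 2" for n
  have tgen: "0 < x * (1 - \<tau>) / 2" "x * (1 - \<tau>) / 2 < 1" "x + x * (1 - \<tau>) / 2 \<le> (1 + \<tau>) / 2"
      "x + x * (1 - \<tau>) / 2 \<le> 2 * x" if "0 < x" "x \<le> \<tau>" for x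
  proof -
    show "0 < x * (1 - \<tau>) / 2" using that tau(1) by simp
    have "x * (1 - \<tau>) \<le> x * 1" using that by (intro mult_left_mono) auto
    then show "x * (1 - \<tau>) / 2 < 1" using that tau(1) by linarith
    have "x * (3 - \<tau>) \<le> \<tau> * (3 - \<tau>)" using that tau(1) by (intro mult_right_mono) auto
    moreover have "\<tau> * (3 - \<tau>) \<le> 1 + \<tau>" using sum_squares_ge_zero[of "\<tau> - 1" 0]
      by (simp add: algebra_simps power2_eq_square)
    ultimately have h: "x * (3 - \<tau>) \<le> 1 + \<tau>" by linarith
    have eq: "x + x * (1 - \<tau>) / 2 = x * (3 - \<tau>) / 2" by (simp add: field_simps)
    show "x + x * (1 - \<tau>) / 2 \<le> (1 + \<tau>) / 2"
      unfolding eq by (rule divide_right_mono[OF h]) simp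
    show "x + x * (1 - \<tau>) / 2 \<le> 2 * x" using that tau(1) by (simp add: algebra_simps)
  qed
  have t0: "0 < t0 n" "t0 n < 1" "a n + t0 n \<le> (1 + \<tau>) / 2" "a n + t0 n \<le> 2 * a n" if "n \<ge> 1" for n
    using tgen[OF apos[OF that] a_le[OF that]] by (simp_all add: t0_def)
  have t1: "0 < t1 n" "t1 n < 1" "c n + t1 n \<le> (1 + \<tau>) / 2" "c n + t1 n \<le> 2 * c n" if "n \<ge> 1" for n
    using tgen[OF cpos[OF that] c_le[OF that]] by (simp_all add: t1_def)
  define T0 where "T0 n x = (SOME S. S \<subseteq> seqs n \<and> pr W x S \<le> t0 n \<and> w * t0 n \<le> pr W x (A0 n x \<union> S))" for n x
  define T1 where "T1 n x = (SOME S. S \<subseteq> seqs n \<and> pr V x S \<le> t1 n \<and> v * t1 n \<le> pr V x ((seqs n - A0 n x) \<union> S))" for n x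
  have T0: "T0 n x \<subseteq> seqs n \<and> pr W x (T0 n x) \<le> t0 n \<and> w * t0 n \<le> pr W x (A0 n x \<union> T0 n x)"
    if "n \<ge> 1" "x \<in> cb n" for n x
    unfolding T0_def
    by (rule someI_ex, rule test_exists[OF chW w(1) w(2) cblen[OF that] A0sub pos0[OF that] t0(1,2)[OF that(1)]])
  have T1: "T1 n x \<subseteq> seqs n \<and> pr V x (T1 n x) \<le> t1 n \<and> v * t1 n \<le> pr V x ((seqs n - A0 n x) \<union> T1 n x)"
    if "n \<ge> 1" "x \<in> cb n" for n x
    unfolding T1_def
    by (rule someI_ex, rule test_exists[OF chV v(1) v(2) cblen[OF that] _ pos1[OF that] t1(1,2)[OF that(1)]]) auto
  define g0 where "g0 n = - ln (a n) / real n" for n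
  define g1 where "g1 n = - ln (c n) / real n" for n
  have lim0': "liminf (\<lambda>n. ereal (g0 n)) = ereal E0" using lim0 by (simp add: g0_def a_def)
  have lim1': "liminf (\<lambda>n. ereal (g1 n)) = ereal E1" using lim1 by (simp add: g1_def c_def)
  have hp: "frequently (\<lambda>n. g0 n - E0 < \<epsilon>) sequentially" if "\<epsilon> > 0" for \<epsilon>
    using liminf_eqD2[OF lim0' that] by (rule frequently_elim1) simp
  have hq: "frequently (\<lambda>n. g1 n - E1 < \<epsilon>) sequentially" if "\<epsilon> > 0" for \<epsilon>
    using liminf_eqD2[OF lim1' that] by (rule frequently_elim1) simp
  obtain N0 where N0: "\<And>\<epsilon>. \<epsilon>>0 \<Longrightarrow> frequently (\<lambda>n. n \<in> N0 \<and> g0 n - E0 < \<epsilon>) sequentially"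
     "\<And>\<epsilon>. \<epsilon>>0 \<Longrightarrow> frequently (\<lambda>n. n \<notin> N0 \<and> g1 n - E1 < \<epsilon>) sequentially"
    using interleave[of "\<lambda>n. g0 n - E0" "\<lambda>n. g1 n - E1", OF hp hq] by blast
  define dsc' where "dsc' n ys x = (if n \<in> N0 then dsc n ys x \<or> ys \<in> T0 n x else dsc n ys x \<and> ys \<notin> T1 n x)"
    for n ys x
  define D where "D n x = {ys\<in>seqs n. dsc' n ys x}" for n x
  have Dsub: "D n x \<subseteq> seqs n" for n x by (auto simp: D_def)
  have e0'_eq: "eps0 W dsc' n x = pr W x (D n x)" for n x by (simp add: eps0_def pr_def D_def)
  have e1'_eq: "eps1 V dsc' n x = pr V x (seqs n - D n x)" for n x
  proof -
    have "{ys\<in>seqs n. \<not> dsc' n ys x} = seqs n - D n x" by (auto simp: D_def)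
    then show ?thesis by (simp add: eps1_def pr_def)
  qed
  have finS: "finite (seqs n :: 'y list set)" for n by (rule finite_seqs)
  have bnd: "0 < eps0 W dsc' n x \<and> eps0 W dsc' n x \<le> 2 * a n \<and> eps0 W dsc' n x \<le> (1 + \<tau>) / 2
        \<and> (n \<in> N0 \<longrightarrow> w * t0 n \<le> eps0 W dsc' n x)
        \<and> 0 < eps1 V dsc' n x \<and> eps1 V dsc' n x \<le> 2 * c n \<and> eps1 V dsc' n x \<le> (1 + \<tau>) / 2
        \<and> (n \<notin> N0 \<longrightarrow> v * t1 n \<le> eps1 V dsc' n x)"
    if n1: "n \<ge> 1" and x: "x \<in> cb n" for n x
  proof (cases "n \<in> N0")
    case True
    note T = T0[OF n1 x]
    have DD: "D n x = A0 n x \<union> T0 n x" using True T by (auto simp: D_def A0_def dsc'_def)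
    have finA: "finite (A0 n x)" "finite (T0 n x)" using finite_subset[OF A0sub finS] finite_subset[OF _ finS] T by auto
    have u1: "eps0 W dsc' n x \<le> a n + t0 n"
      using pr_union_le[OF chW finA, of x] e0'_eq[of n x] DD T a_ge[OF x] e0_eq[of n x] by simp
    have l1: "w * t0 n \<le> eps0 W dsc' n x" using T DD e0'_eq by simp
    have "0 < w * t0 n" using w(1) t0(1)[OF n1] by simp
    moreover have u2: "eps1 V dsc' n x \<le> c n"
    proof -
      have "pr V x (seqs n - D n x) \<le> pr V x (seqs n - A0 n x)"
        by (rule pr_mono[OF chV]) (auto simp: DD finS)
      then show ?thesis using e1'_eq e1_eq c_ge[OF x] by simp
    qed
    moreover have "0 < eps1 V dsc' n x"
    proof -
      have "seqs n - D n x \<noteq> {}"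
      proof
        assume "seqs n - D n x = {}"
        then have "D n x = seqs n" using Dsub by blast
        then have "eps0 W dsc' n x = 1" using e0'_eq total_sum[OF chW cblen[OF n1 x]] by simp
        then show False using u1 t0(3)[OF n1] tau(1) by simp
      qed
      then show ?thesis using e1'_eq pr_pos[OF chV Vpos] finS by (metis finite_Diff)
    qed
    ultimately show ?thesis using u1 l1 t0(3,4)[OF n1] True cpos[OF n1] c_le[OF n1] tau(1) by auto
  next
    case False
    note T = T1[OF n1 x]
    have DD: "seqs n - D n x = (seqs n - A0 n x) \<union> T1 n x" using False T by (auto simp: D_def A0_def dsc'_def)
    have finA: "finite (seqs n - A0 n x)" "finite (T1 n x)" using finS finite_subset[OF _ finS] T by auto
    have u1: "eps1 V dsc' n x \<le> c n + t1 n"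
      using pr_union_le[OF chV finA, of x] e1'_eq[of n x] DD T c_ge[OF x] e1_eq[of n x] by simp
    have l1: "v * t1 n \<le> eps1 V dsc' n x" using T DD e1'_eq by simp
    have "0 < v * t1 n" using v(1) t1(1)[OF n1] by simp
    moreover have u2: "eps0 W dsc' n x \<le> a n"
    proof -
      have "pr W x (D n x) \<le> pr W x (A0 n x)"
        by (rule pr_mono[OF chW]) (use False in \<open>auto simp: D_def A0_def dsc'_def finS\<close>)
      then show ?thesis using e0'_eq e0_eq a_ge[OF x] by simp
    qed
    moreover have "0 < eps0 W dsc' n x"
    proof -
      have "D n x \<noteq> {}"
      proof
        assume "D n x = {}"
        then have "eps1 V dsc' n x = 1" using e1'_eq total_sum[OF chV cblen[OF n1 x]] by simp
        then show False using u1 t1(3)[OF n1] tau(1) by simp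
      qed
      then show ?thesis using e0'_eq pr_pos[OF chW Wpos] finite_subset[OF Dsub finS] by metis
    qed
    ultimately show ?thesis using u1 l1 t1(3,4)[OF n1] False apos[OF n1] a_le[OF n1] tau(1) by auto
  qed
  have "\<forall>n. \<exists>S. finite S \<and> (n \<ge> 1 \<longrightarrow> (S \<subseteq> {1..Mn n} \<and> S \<noteq> {}
          \<and> (\<forall>m\<in>S. \<forall>m'\<in>S. cnt (enc n m) = cnt (enc n m'))
          \<and> real (Mn n) \<le> (real n + 1) ^ CARD('x) * real (card S)))"
  proof
    fix n
    show "\<exists>S. finite S \<and> (n \<ge> 1 \<longrightarrow> (S \<subseteq> {1..Mn n} \<and> S \<noteq> {}
          \<and> (\<forall>m\<in>S. \<forall>m'\<in>S. cnt (enc n m) = cnt (enc n m'))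
          \<and> real (Mn n) \<le> (real n + 1) ^ CARD('x) * real (card S)))"
    proof (cases "n \<ge> 1")
      case True
      have "Mn n \<ge> 1" "\<forall>m\<in>{1..Mn n}. length (enc n m) = n"
        using valid[OF True] by (auto simp: valid_code_def)
      from type_pigeonhole[OF this] obtain S where "S \<subseteq> {1..Mn n}" "S \<noteq> {}"
        "\<forall>m\<in>S. \<forall>m'\<in>S. cnt (enc n m) = cnt (enc n m')"
        "real (Mn n) \<le> (real n + 1) ^ CARD('x) * real (card S)" by blast
      moreover have "finite S" by (rule finite_subset[OF \<open>S \<subseteq> {1..Mn n}\<close> finite_atLeastAtMost])
      ultimately show ?thesis by blast
    next
      case False then show ?thesis by (intro exI[of _ "{}"]) auto
    qed
  qed
  from choice[OF this] obtain S where SS: "\<forall>n. finite (S n) \<and> (n \<ge> 1 \<longrightarrow> (S n \<subseteq> {1..Mn n} \<and> S n \<noteq> {}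
          \<and> (\<forall>m\<in>S n. \<forall>m'\<in>S n. cnt (enc n m) = cnt (enc n m'))
          \<and> real (Mn n) \<le> (real n + 1) ^ CARD('x) * real (card (S n))))" by blast
  have Sfin: "\<And>n. finite (S n)" using SS by blast
  have Ssub: "\<And>n. n \<ge> 1 \<Longrightarrow> S n \<subseteq> {1..Mn n}" using SS by blast
  have Sne: "\<And>n. n \<ge> 1 \<Longrightarrow> S n \<noteq> {}" using SS by blast
  have Scnt: "\<And>n m m'. n \<ge> 1 \<Longrightarrow> m \<in> S n \<Longrightarrow> m' \<in> S n \<Longrightarrow> cnt (enc n m) = cnt (enc n m')"
    using SS by blast
  have Scard: "\<And>n. n \<ge> 1 \<Longrightarrow> real (Mn n) \<le> (real n + 1) ^ CARD('x) * real (card (S n))"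
    using SS by blast
  have "\<forall>n. \<exists>h. bij_betw h {0..<card (S n)} (S n)" using ex_bij_betw_nat_finite Sfin by blast
  from choice[OF this] obtain g where g: "\<And>n. bij_betw (g n) {0..<card (S n)} (S n)" by blast
  define M' where "M' n = card (S n)" for n
  define enc' where "enc' n m = enc n (g n (m - 1))" for n m
  define dec' where "dec' n zs = (if dec n zs \<in> S n then the_inv_into {0..<card (S n)} (g n) (dec n zs) + 1 else 1)"
    for n zs
  have sh: "(\<lambda>m. m - 1) ` {1..k} = {0..<k}" for k :: nat
  proof (rule set_eqI)
    fix i show "i \<in> (\<lambda>m. m - 1) ` {1..k} \<longleftrightarrow> i \<in> {0..<k}"
      by (auto simp: image_iff intro: bexI[of _ "i + 1"])
  qed
  have cb': "codebook M' enc' n = enc n ` S n" for n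
  proof -
    have "codebook M' enc' n = enc n ` g n ` (\<lambda>m. m - 1) ` {1..M' n}"
      by (simp add: codebook_def enc'_def image_image)
    also have "\<dots> = enc n ` S n" using g[of n] unfolding M'_def sh by (simp add: bij_betw_def)
    finally show ?thesis .
  qed
  have cbsub: "enc n ` S n \<subseteq> cb n" if "n \<ge> 1" for n
    using Ssub[OF that] by (auto simp: cb_def codebook_def)
  have X0: "0 < eps0C W M' enc' dsc' n \<and> eps0C W M' enc' dsc' n \<le> 2 * a n
       \<and> eps0C W M' enc' dsc' n \<le> (1 + \<tau>) / 2 \<and> (n \<in> N0 \<longrightarrow> w * t0 n \<le> eps0C W M' enc' dsc' n)"
    if n1: "n \<ge> 1" for n
  proof -
    have fin: "finite (eps0 W dsc' n ` enc n ` S n)" using Sfin by simp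
    have ne: "eps0 W dsc' n ` enc n ` S n \<noteq> {}" using Sne[OF n1] by simp
    have eq: "eps0C W M' enc' dsc' n = Max (eps0 W dsc' n ` enc n ` S n)" by (simp add: eps0C_def cb')
    obtain x where x: "x \<in> enc n ` S n" "eps0C W M' enc' dsc' n = eps0 W dsc' n x"
      using Max_in[OF fin ne] eq by auto
    obtain x0 where x0: "x0 \<in> enc n ` S n" using Sne[OF n1] by auto
    have "eps0 W dsc' n x0 \<le> eps0C W M' enc' dsc' n" using eq fin x0 by simp
    then show ?thesis using bnd[OF n1, of x] bnd[OF n1, of x0] x x0 cbsub[OF n1] by auto
  qed
  have X1: "0 < eps1C V M' enc' dsc' n \<and> eps1C V M' enc' dsc' n \<le> 2 * c n
       \<and> eps1C V M' enc' dsc' n \<le> (1 + \<tau>) / 2 \<and> (n \<notin> N0 \<longrightarrow> v * t1 n \<le> eps1C V M' enc' dsc' n)"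
    if n1: "n \<ge> 1" for n
  proof -
    have fin: "finite (eps1 V dsc' n ` enc n ` S n)" using Sfin by simp
    have ne: "eps1 V dsc' n ` enc n ` S n \<noteq> {}" using Sne[OF n1] by simp
    have eq: "eps1C V M' enc' dsc' n = Max (eps1 V dsc' n ` enc n ` S n)" by (simp add: eps1C_def cb')
    obtain x where x: "x \<in> enc n ` S n" "eps1C V M' enc' dsc' n = eps1 V dsc' n x"
      using Max_in[OF fin ne] eq by auto
    obtain x0 where x0: "x0 \<in> enc n ` S n" using Sne[OF n1] by auto
    have "eps1 V dsc' n x0 \<le> eps1C V M' enc' dsc' n" using eq fin x0 by simp
    then show ?thesis using bnd[OF n1, of x] bnd[OF n1, of x0] x x0 cbsub[OF n1] by auto
  qed
  have Mpos: "1 \<le> M' n" if "n \<ge> 1" for n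
    using Sfin[of n] Sne[OF that] by (simp add: M'_def Suc_le_eq card_gt_0_iff)
  have gS: "g n (m - 1) \<in> S n" if "m \<in> {1..M' n}" for n m
    using g[of n] that by (auto simp: M'_def bij_betw_def)
  have ginv: "the_inv_into {0..<card (S n)} (g n) (g n (m - 1)) = m - 1" if "m \<in> {1..M' n}" for n m
    using g[of n] that by (intro the_inv_into_f_f) (auto simp: M'_def bij_betw_def)
  have valid': "valid_code b B M' enc' dec' n" if n1: "n \<ge> 1" for n
    unfolding valid_code_def
  proof (intro conjI ballI allI)
    show "1 \<le> M' n" by (rule Mpos[OF n1])
  next
    fix m assume m: "m \<in> {1..M' n}"
    have "g n (m - 1) \<in> {1..Mn n}" using gS[OF m] Ssub[OF n1] by auto
    then show "length (enc' n m) = n"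
      using valid[OF n1] by (auto simp: valid_code_def enc'_def)
  next
    fix m assume m: "m \<in> {1..M' n}"
    have "g n (m - 1) \<in> {1..Mn n}" using gS[OF m] Ssub[OF n1] by auto
    then show "(\<Sum>i<n. b (enc' n m ! i)) / real n \<le> B"
      using valid[OF n1] by (auto simp: valid_code_def enc'_def)
  next
    fix zs
    show "dec' n zs \<in> {1..M' n}"
    proof (cases "dec n zs \<in> S n")
      case True
      have "the_inv_into {0..<card (S n)} (g n) (dec n zs) \<in> {0..<card (S n)}"
        using g[of n] True by (intro the_inv_into_into) (auto simp: bij_betw_def)
      then show ?thesis using True by (auto simp: dec'_def M'_def)
    next
      case False then show ?thesis using Mpos[OF n1] by (simp add: dec'_def)
    qed
  qed
  have Pe_le: "Pe P M' enc' dec' n \<le> Pe P Mn enc dec n" and Pe_ge: "0 \<le> Pe P M' enc' dec' n"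
    if n1: "n \<ge> 1" for n
  proof -
    define F' where "F' = (\<lambda>m. \<Sum>zs\<in>{zs\<in>seqs n. dec' n zs \<noteq> m}. prod_chan P (enc' n m) zs)"
    define F where "F = (\<lambda>m. \<Sum>zs\<in>{zs\<in>seqs n. dec n zs \<noteq> m}. prod_chan P (enc n m) zs)"
    have fin: "finite (F' ` {1..M' n})" by simp
    have ne: "F' ` {1..M' n} \<noteq> {}" using Mpos[OF n1] by auto
    have F'nn: "0 \<le> F' m" for m unfolding F'_def by (intro sum_nonneg prod_chan_nonneg chP)
    have "F' m \<le> Pe P Mn enc dec n" if m: "m \<in> {1..M' n}" for m
    proof -
      define m0 where "m0 = g n (m - 1)"
      have m0S: "m0 \<in> S n" using gS[OF m] by (simp add: m0_def)
      have sub: "{zs\<in>seqs n. dec' n zs \<noteq> m} \<subseteq> {zs\<in>seqs n. dec n zs \<noteq> m0}"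
      proof
        fix zs assume zs: "zs \<in> {zs\<in>seqs n. dec' n zs \<noteq> m}"
        have "dec n zs \<noteq> m0"
        proof
          assume d: "dec n zs = m0"
          then have "dec' n zs = m - 1 + 1" using m0S ginv[OF m] by (simp add: dec'_def m0_def)
          then show False using zs m by auto
        qed
        then show "zs \<in> {zs\<in>seqs n. dec n zs \<noteq> m0}" using zs by auto
      qed
      have "F' m \<le> F m0" unfolding F'_def F_def enc'_def m0_def[symmetric]
        by (rule sum_mono2) (use sub finite_seqs[of n] chP in \<open>auto intro: prod_chan_nonneg finite_subset\<close>)
      also have "F m0 \<le> Pe P Mn enc dec n" unfolding Pe_def F_def[symmetric]
        using m0S Ssub[OF n1] by (intro Max_ge) auto
      finally show ?thesis .
    qed
    then show "Pe P M' enc' dec' n \<le> Pe P Mn enc dec n" unfolding Pe_def F'_def[symmetric]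
      using fin ne by (intro Max.boundedI) auto
    obtain m where "m \<in> {1..M' n}" using Mpos[OF n1] by auto
    then have "F' m \<le> Pe P M' enc' dec' n" unfolding Pe_def F'_def[symmetric] using fin by (intro Max_ge) auto
    then show "0 \<le> Pe P M' enc' dec' n" using F'nn[of m] by linarith
  qed
  have PeT': "Pe P M' enc' dec' \<longlonglongrightarrow> 0"
  proof (rule tendsto_sandwich[of "\<lambda>_. 0" _ _ "Pe P Mn enc dec"])
    show "eventually (\<lambda>n. 0 \<le> Pe P M' enc' dec' n) sequentially"
      using eventually_ge_at_top[of "1::nat"] by (rule eventually_mono) (rule Pe_ge)
    show "eventually (\<lambda>n. Pe P M' enc' dec' n \<le> Pe P Mn enc dec n) sequentially"
      using eventually_ge_at_top[of "1::nat"] by (rule eventually_mono) (rule Pe_le)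
  qed (use PeT in auto)
  have rate': "liminf (\<lambda>n. ereal (ln (real (M' n)) / real n)) = ereal R"
  proof (rule exp_transfer[OF limR, where hA = "\<lambda>n. real CARD('x) * (ln (real n + 1) / real n)"
        and hB = "\<lambda>_. 0" and NN = UNIV])
    fix n :: nat assume n1: "n \<ge> 1"
    have M1: "1 \<le> Mn n" using valid[OF n1] by (simp add: valid_code_def)
    have "ln (real (Mn n)) \<le> ln ((real n + 1) ^ CARD('x) * real (M' n))"
      using Scard[OF n1] M1 by (subst ln_le_cancel_iff) (auto simp: M'_def)
    also have "\<dots> = real CARD('x) * ln (real n + 1) + ln (real (M' n))"
      using Mpos[OF n1] by (simp add: ln_mult ln_realpow)
    finally have "ln (real (Mn n)) - real CARD('x) * ln (real n + 1) \<le> ln (real (M' n))" by simp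
    then have "(ln (real (Mn n)) - real CARD('x) * ln (real n + 1)) / real n \<le> ln (real (M' n)) / real n"
      by (simp add: divide_right_mono)
    then show "ln (real (Mn n)) / real n - real CARD('x) * (ln (real n + 1) / real n) \<le> ln (real (M' n)) / real n"
      by (simp add: diff_divide_distrib)
  next
    fix n :: nat assume n1: "n \<ge> 1"
    have "M' n \<le> Mn n" using card_mono[OF _ Ssub[OF n1]] by (simp add: M'_def)
    then have "ln (real (M' n)) \<le> ln (real (Mn n))" using Mpos[OF n1] by (subst ln_le_cancel_iff) auto
    then show "ln (real (M' n)) / real n \<le> ln (real (Mn n)) / real n + 0" by (simp add: divide_right_mono)
  next
    show "(\<lambda>n. real CARD('x) * (ln (real n + 1) / real n)) \<longlonglongrightarrow> 0"
      using tendsto_mult[OF tendsto_const ln_over_n, of "real CARD('x)"] by simp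
  next
    fix \<epsilon> :: real assume "\<epsilon> > 0"
    show "frequently (\<lambda>n. n \<in> UNIV \<and> ln (real (Mn n)) / real n - R < \<epsilon>) sequentially"
      using liminf_eqD2[OF limR \<open>\<epsilon> > 0\<close>] by (rule frequently_elim1) simp
  qed simp
  define k0 where "k0 = w * (1 - \<tau>) / 2"
  define k1 where "k1 = v * (1 - \<tau>) / 2"
  have k0: "0 < k0" using w(1) tau(1) by (simp add: k0_def)
  have k1: "0 < k1" using v(1) tau(1) by (simp add: k1_def)
  have exp0: "liminf (\<lambda>n. ereal (- ln (eps0C W M' enc' dsc' n) / real n)) = ereal E0"
  proof (rule exp_transfer[OF lim0', where hA = "\<lambda>n. ln 2 / real n" and hB = "\<lambda>n. - ln k0 / real n" and NN = N0])
    fix n :: nat assume n1: "n \<ge> 1"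
    show "g0 n - ln 2 / real n \<le> - ln (eps0C W M' enc' dsc' n) / real n"
      unfolding g0_def using ln_lo[of "eps0C W M' enc' dsc' n" "a n" 2 n] X0[OF n1] apos[OF n1] by simp
  next
    fix n :: nat assume n1: "n \<ge> 1" and nN: "n \<in> N0"
    have "k0 * a n \<le> eps0C W M' enc' dsc' n" using X0[OF n1] nN by (simp add: k0_def t0_def mult_ac)
    then show "- ln (eps0C W M' enc' dsc' n) / real n \<le> g0 n + - ln k0 / real n"
      unfolding g0_def using ln_up[of "eps0C W M' enc' dsc' n" "a n" k0 n] X0[OF n1] apos[OF n1] k0 by simp
  qed (auto intro: const_over_n const_over_n2 N0(1))
  have exp1: "liminf (\<lambda>n. ereal (- ln (eps1C V M' enc' dsc' n) / real n)) = ereal E1"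
  proof (rule exp_transfer[OF lim1', where hA = "\<lambda>n. ln 2 / real n" and hB = "\<lambda>n. - ln k1 / real n" and NN = "- N0"])
    fix n :: nat assume n1: "n \<ge> 1"
    show "g1 n - ln 2 / real n \<le> - ln (eps1C V M' enc' dsc' n) / real n"
      unfolding g1_def using ln_lo[of "eps1C V M' enc' dsc' n" "c n" 2 n] X1[OF n1] cpos[OF n1] by simp
  next
    fix n :: nat assume n1: "n \<ge> 1" and nN: "n \<in> - N0"
    have "k1 * c n \<le> eps1C V M' enc' dsc' n" using X1[OF n1] nN by (simp add: k1_def t1_def mult_ac)
    then show "- ln (eps1C V M' enc' dsc' n) / real n \<le> g1 n + - ln k1 / real n"
      unfolding g1_def using ln_up[of "eps1C V M' enc' dsc' n" "c n" k1 n] X1[OF n1] cpos[OF n1] k1 by simp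
  qed (auto intro: const_over_n const_over_n2 N0(2))
  have tau': "max (eps0C W M' enc' dsc' n) (eps1C V M' enc' dsc' n) \<le> (1 + \<tau>) / 2" if "n \<ge> 1" for n
    using X0[OF that] X1[OF that] by (simp only: max.bounded_iff)
  have cc: "constant_composition M' enc'"
    unfolding constant_composition_def
  proof (intro allI impI ballI)
    fix n xs xs' assume n1: "n \<ge> 1" and xs: "xs \<in> codebook M' enc' n" and xs': "xs' \<in> codebook M' enc' n"
    obtain m m' where mm: "m \<in> S n" "m' \<in> S n" "xs = enc n m" "xs' = enc n m'" using xs xs' cb' by auto
    have "length xs = n" "length xs' = n" using cblen[OF n1] cbsub[OF n1] mm by auto
    moreover have "cnt xs = cnt xs'" using Scnt[OF n1 mm(1,2)] mm by simp
    ultimately show "type_of xs = type_of xs'" by (simp add: type_of_cnt)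
  qed
  have "achieves P W V b B M' enc' dec' dsc' R E0 E1"
    unfolding achieves_def
    using valid' PeT' rate' exp0 exp1 tau' tau(1)
    by (intro conjI exI[of _ "(1 + \<tau>) / 2"]) auto
  then show ?thesis using cc by blast
qed

end
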